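(* Let $q$ be even and $n\ge2$. The unipotent conjugacy classes of type $(2,1,\dots,1)$ in $\mathbf{SL}_n(q)$ are not of type D.
   Context: Unipotent type = sizes of Jordan blocks; type $(2,1,\dots,1)$ means one block of size 2 and $n-2$ blocks of size 1. Conjugacy classes are racks with $x\triangleright y=xyx^{-1}$. A subrack $Y$ is decomposable if $Y=R\sqcup S$ with nonempty subracks $R,S$, $Y\triangleright R=R$, $Y\triangleright S=S$. Type D: a decomposable subrack $R\sqcup S$ with $r\in R,s\in S$ and $r\triangleright(s\triangleright(r\triangleright s))\neq s$. *)

theory Defs
  imports "Jordan_Normal_Form.Jordan_Normal_Form"
begin

definition SL_mat :: "nat \<Rightarrow> 'a :: field mat set" where
  "SL_mat n = {A \<in> carrier_mat n n. det A = 1}"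

definition minv :: "nat \<Rightarrow> 'a :: field mat \<Rightarrow> 'a mat" where
  "minv n A = (THE B. B \<in> carrier_mat n n \<and> A * B = 1\<^sub>m n \<and> B * A = 1\<^sub>m n)"

definition mconj :: "nat \<Rightarrow> 'a :: field mat \<Rightarrow> 'a mat \<Rightarrow> 'a mat" where
  "mconj n x y = x * y * minv n x"

definition SL_class :: "nat \<Rightarrow> 'a :: field mat \<Rightarrow> 'a mat set" where
  "SL_class n x = {mconj n g x | g. g \<in> SL_mat n}"

definition is_subrack :: "'x set \<Rightarrow> ('x \<Rightarrow> 'x \<Rightarrow> 'x) \<Rightarrow> 'x set \<Rightarrow> bool" where
  "is_subrack X op Y \<longleftrightarrow> Y \<subseteq> X \<and> (\<forall>a\<in>Y. \<forall>b\<in>Y. op a b \<in> Y)"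

definition decomposition :: "'x set \<Rightarrow> ('x \<Rightarrow> 'x \<Rightarrow> 'x) \<Rightarrow> 'x set \<Rightarrow> 'x set \<Rightarrow> bool" where
  "decomposition X op R S \<longleftrightarrow>
     is_subrack X op (R \<union> S) \<and> R \<inter> S = {} \<and> R \<noteq> {} \<and> S \<noteq> {} \<and>
     is_subrack X op R \<and> is_subrack X op S \<and>
     (\<forall>y\<in>R \<union> S. op y ` R = R \<and> op y ` S = S)"

definition type_D :: "'x set \<Rightarrow> ('x \<Rightarrow> 'x \<Rightarrow> 'x) \<Rightarrow> bool" where
  "type_D X op \<longleftrightarrow> (\<exists>R S. decomposition X op R S \<and>
     (\<exists>r\<in>R. \<exists>s\<in>S. op r (op s (op r s)) \<noteq> s))"

end

theory Submission
  imports Defs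
begin


lemma inv_even:
  "finite X \<Longrightarrow> (\<forall>x\<in>X. h x \<in> X \<and> h (h x) = x \<and> h x \<noteq> x) \<Longrightarrow> even (card X)"
proof (induction "card X" arbitrary: X rule: less_induct)
  case less
  show ?case
  proof (cases "X = {}")
    case True then show ?thesis by simp
  next
    case False
    then obtain x where x: "x \<in> X" by blast
    define X' where "X' = X - {x, h x}"
    have hx: "h x \<in> X" "h x \<noteq> x" using less.prems x by auto
    have cX: "card X = card X' + 2"
    proof -
      have "{x, h x} \<subseteq> X" using x hx by auto
      then have "card X' = card X - card {x, h x}" unfolding X'_def
        using less.prems(1) by (simp add: card_Diff_subset finite_subset)
      moreover have "card {x, h x} = 2" using hx by simp
      moreover have "card {x, h x} \<le> card X" using \<open>{x, h x} \<subseteq> X\<close> less.prems(1) card_mono by blast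
      ultimately show ?thesis by simp
    qed
    have fin: "finite X'" unfolding X'_def using less.prems(1) by simp
    have cl: "\<forall>z\<in>X'. h z \<in> X' \<and> h (h z) = z \<and> h z \<noteq> z"
    proof
      fix z assume z: "z \<in> X'"
      then have zX: "z \<in> X" "z \<noteq> x" "z \<noteq> h x" unfolding X'_def by auto
      have "h z \<noteq> x" using zX less.prems(2) x by metis
      moreover have "h z \<noteq> h x" using zX less.prems(2) x by metis
      ultimately show "h z \<in> X' \<and> h (h z) = z \<and> h z \<noteq> z" unfolding X'_def using zX less.prems(2) by auto
    qed
    have "even (card X')" using less.hyps[of X'] cX fin cl by simp
    then show ?thesis using cX by simp
  qed
qed

lemma char2_of_even:
  assumes "even (card (UNIV :: 'a :: {field, finite} set))"
  shows "(1::'a) + 1 = 0"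
proof (rule ccontr)
  assume ne: "(1::'a) + 1 \<noteq> 0"
  define X where "X = (UNIV :: 'a set) - {0}"
  have "even (card X)"
  proof (rule inv_even[of X uminus])
    show "finite X" unfolding X_def by simp
    show "\<forall>x\<in>X. - x \<in> X \<and> - (- x) = x \<and> - x \<noteq> x"
    proof
      fix x assume x: "x \<in> X"
      have "- x \<noteq> x"
      proof
        assume "- x = x"
        then have "(1 + 1) * x = 0" by (simp add: distrib_right)
        then show False using ne x unfolding X_def by simp
      qed
      then show "- x \<in> X \<and> - (- x) = x \<and> - x \<noteq> x" using x unfolding X_def by auto
    qed
  qed
  moreover have "card (UNIV :: 'a set) = card X + 1" unfolding X_def
    using card_gt_0_iff[of "UNIV :: 'a set"] by (simp add: card_Diff_singleton)
  ultimately show False using assms by simp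
qed


context
  fixes n :: nat
  assumes ch2: "(1::'a::{field,finite}) + 1 = 0"
begin

abbreviation Cn :: "'a mat set" where "Cn \<equiv> carrier_mat n n"
abbreviation II :: "'a mat" where "II \<equiv> 1\<^sub>m n"
abbreviation ZZ :: "'a mat" where "ZZ \<equiv> 0\<^sub>m n n"

lemma ch2x: "(x::'a) + x = 0"
proof -
  have "x + x = x * (1 + 1)" by (simp add: algebra_simps)
  thus ?thesis using ch2 by simp
qed

lemma ch2': "(2::'a) = 0" using ch2 by simp

lemma ch2neg: "- (x::'a) = x"
  using ch2x[of x] by (simp add: add_eq_0_iff2 eq_neg_iff_add_eq_0)

lemma mc[simp]:
  "A \<in> Cn \<Longrightarrow> B \<in> Cn \<Longrightarrow> A * B \<in> Cn"
  "A \<in> Cn \<Longrightarrow> B \<in> Cn \<Longrightarrow> A + B \<in> Cn"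
  by auto

lemma ml:
  "A \<in> Cn \<Longrightarrow> B \<in> Cn \<Longrightarrow> C \<in> Cn \<Longrightarrow> (A + B) * C = A * C + B * C"
  "A \<in> Cn \<Longrightarrow> B \<in> Cn \<Longrightarrow> C \<in> Cn \<Longrightarrow> C * (A + B) = C * A + C * B"
  "A \<in> Cn \<Longrightarrow> B \<in> Cn \<Longrightarrow> C \<in> Cn \<Longrightarrow> (A * B) * C = A * (B * C)"
  "A \<in> Cn \<Longrightarrow> B \<in> Cn \<Longrightarrow> C \<in> Cn \<Longrightarrow> (A + B) + C = A + (B + C)"
  "A \<in> Cn \<Longrightarrow> B \<in> Cn \<Longrightarrow> A + B = B + A"
  "A \<in> Cn \<Longrightarrow> B \<in> Cn \<Longrightarrow> C \<in> Cn \<Longrightarrow> A + (B + C) = B + (A + C)"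
  "A \<in> Cn \<Longrightarrow> A + A = ZZ"
  "A \<in> Cn \<Longrightarrow> B \<in> Cn \<Longrightarrow> A + (A + B) = B"
  "A \<in> Cn \<Longrightarrow> II * A = A"
  "A \<in> Cn \<Longrightarrow> A * II = A"
  "A \<in> Cn \<Longrightarrow> ZZ * A = ZZ"
  "A \<in> Cn \<Longrightarrow> A * ZZ = ZZ"
  "A \<in> Cn \<Longrightarrow> ZZ + A = A"
  "A \<in> Cn \<Longrightarrow> A + ZZ = A"
  by (auto simp: add_mult_distrib_mat mult_add_distrib_mat comm_add_mat ch2x ch2' intro!: eq_matI)

lemma sm:
  "A \<in> Cn \<Longrightarrow> B \<in> Cn \<Longrightarrow> (c \<cdot>\<^sub>m A) * B = c \<cdot>\<^sub>m (A * B)"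
  "A \<in> Cn \<Longrightarrow> B \<in> Cn \<Longrightarrow> A * (c \<cdot>\<^sub>m B) = c \<cdot>\<^sub>m (A * B)"
  "A \<in> Cn \<Longrightarrow> c \<cdot>\<^sub>m (d \<cdot>\<^sub>m A) = (c * d) \<cdot>\<^sub>m A"
  "A \<in> Cn \<Longrightarrow> B \<in> Cn \<Longrightarrow> c \<cdot>\<^sub>m (A + B) = c \<cdot>\<^sub>m A + c \<cdot>\<^sub>m B"
  "A \<in> Cn \<Longrightarrow> 1 \<cdot>\<^sub>m A = A"
  "A \<in> Cn \<Longrightarrow> 0 \<cdot>\<^sub>m A = ZZ"
  "c \<cdot>\<^sub>m ZZ = ZZ"
  by (auto simp: mult_smult_assoc_mat mult_smult_distrib intro!: eq_matI simp: algebra_simps distrib_right)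

lemma smc:
  "A \<in> Cn \<Longrightarrow> c \<cdot>\<^sub>m A + d \<cdot>\<^sub>m A = (c + d) \<cdot>\<^sub>m A"
  "A \<in> Cn \<Longrightarrow> B \<in> Cn \<Longrightarrow> c \<cdot>\<^sub>m A + (d \<cdot>\<^sub>m A + B) = (c + d) \<cdot>\<^sub>m A + B"
  by (auto intro!: eq_matI simp: algebra_simps distrib_right)

lemma smult_zero_iff: "A \<in> Cn \<Longrightarrow> c \<cdot>\<^sub>m A = ZZ \<Longrightarrow> c = 0 \<or> A = ZZ"
proof (rule ccontr)
  assume A: "A \<in> Cn" and e: "c \<cdot>\<^sub>m A = ZZ" and nz: "\<not> (c = 0 \<or> A = ZZ)"
  have "\<exists>i<n. \<exists>j<n. A $$ (i,j) \<noteq> 0"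
  proof (rule ccontr)
    assume "\<not> ?thesis"
    then have "A = ZZ" using A by (auto intro!: eq_matI)
    with nz show False by simp
  qed
  then obtain i j where ij: "i < n" "j < n" "A $$ (i,j) \<noteq> 0" by auto
  from e have "(c \<cdot>\<^sub>m A) $$ (i,j) = ZZ $$ (i,j)" by simp
  with ij A nz show False by auto
qed

lemma smult_cancel: "A \<in> Cn \<Longrightarrow> c \<cdot>\<^sub>m A = d \<cdot>\<^sub>m A \<Longrightarrow> A \<noteq> ZZ \<Longrightarrow> c = d"
proof -
  assume A: "A \<in> Cn" and e: "c \<cdot>\<^sub>m A = d \<cdot>\<^sub>m A" and nz: "A \<noteq> ZZ"
  have "(c + d) \<cdot>\<^sub>m A = c \<cdot>\<^sub>m A + d \<cdot>\<^sub>m A" using A by (simp add: smc)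
  also have "\<dots> = ZZ" using e A by (simp add: ml)
  finally have "(c + d) \<cdot>\<^sub>m A = ZZ" .
  then have "c + d = 0" using smult_zero_iff[OF A] nz by blast
  then show "c = d" using ch2x[of d] by (metis add_right_cancel)
qed

lemma red:
  assumes E: "E \<in> Cn" and y: "y \<in> Cn" and EE: "E * E = E" and Ey: "E * y = y" and yE: "y * E = y"
    and yy: "y * y = E + l \<cdot>\<^sub>m y" and l: "l \<noteq> 0"
    and N: "N = a \<cdot>\<^sub>m E + b \<cdot>\<^sub>m y" and NN: "N * N = ZZ"
  shows "N = ZZ"
proof -
  have "N * N = (a*a) \<cdot>\<^sub>m (E * E) + (b*a) \<cdot>\<^sub>m (E * y) + (a * b) \<cdot>\<^sub>m (y * E) + (b*b) \<cdot>\<^sub>m (y * y)"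
    unfolding N using E y by (simp add: ml sm)
  also have "\<dots> = (a*a) \<cdot>\<^sub>m E + ((a*b) \<cdot>\<^sub>m y + (a * b) \<cdot>\<^sub>m y) + (b*b) \<cdot>\<^sub>m (E + l \<cdot>\<^sub>m y)"
    using E y by (simp add: EE Ey yE yy ml mult.commute)
  also have "\<dots> = (a*a + b*b) \<cdot>\<^sub>m E + (b*b*l) \<cdot>\<^sub>m y"
    using E y by (simp add: ml sm smc mult.assoc)
  finally have NN2: "(a*a + b*b) \<cdot>\<^sub>m E + (b*b*l) \<cdot>\<^sub>m y = ZZ" using NN by simp
  show ?thesis
  proof (cases "b = 0")
    case True
    then have Ne: "N = a \<cdot>\<^sub>m E" using N E y by (simp add: sm ml)
    have "(a*a) \<cdot>\<^sub>m E = ZZ" using NN2 True E y by (simp add: sm ml)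
    then have "a * a = 0 \<or> E = ZZ" using smult_zero_iff E by blast
    then show ?thesis using Ne E by (auto simp: sm)
  next
    case False
    define u where "u = a*a + b*b"
    define v where "v = b*b*l"
    have v: "v \<noteq> 0" using False l unfolding v_def by simp
    have ye: "y = (u / v) \<cdot>\<^sub>m E"
    proof (rule eq_matI)
      fix i j assume ij: "i < dim_row ((u / v) \<cdot>\<^sub>m E)" "j < dim_col ((u / v) \<cdot>\<^sub>m E)"
      then have ij': "i < n" "j < n" using E by auto
      have "(u \<cdot>\<^sub>m E + v \<cdot>\<^sub>m y) $$ (i,j) = ZZ $$ (i,j)" using NN2 unfolding u_def v_def by simp
      then have "u * E $$ (i,j) + v * y $$ (i,j) = 0" using ij' E y by simp
      then have "v * y $$ (i,j) = - (u * E $$ (i,j))" by (simp add: eq_neg_iff_add_eq_0 add.commute)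
      then have "v * y $$ (i,j) = u * E $$ (i,j)" by (simp add: ch2neg)
      then show "y $$ (i,j) = ((u / v) \<cdot>\<^sub>m E) $$ (i,j)" using ij' E v by (simp add: field_simps)
    qed (use E y in auto)
    define c where "c = a + b * (u / v)"
    have Ne: "N = c \<cdot>\<^sub>m E" unfolding N c_def ye using E by (simp add: sm smc)
    have "N * N = (c * c) \<cdot>\<^sub>m E" unfolding Ne using E by (simp add: sm EE)
    then have "(c * c) \<cdot>\<^sub>m E = ZZ" using NN by simp
    then have "c * c = 0 \<or> E = ZZ" using smult_zero_iff E by blast
    then show ?thesis using Ne E by (auto simp: sm)
  qed
qed

lemma pow_add_n: "t \<in> Cn \<Longrightarrow> t ^\<^sub>m (a + d) = t ^\<^sub>m a * t ^\<^sub>m d"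
proof (induction d)
  case 0
  then show ?case by (simp add: ml)
next
  case (Suc d)
  then show ?case by (simp add: ml)
qed

lemma pow_Suc_left_n: "t \<in> Cn \<Longrightarrow> t ^\<^sub>m (Suc k) = t * t ^\<^sub>m k"
  using pow_add_n[of t 1 k] by (simp add: ml)

lemma pow_inv_n: assumes t: "t \<in> Cn" and u: "u \<in> Cn" and ut: "u * t = II"
  shows "u ^\<^sub>m k * t ^\<^sub>m k = II"
proof (induction k)
  case 0
  then show ?case using t u by (simp add: ml)
next
  case (Suc k)
  have ut': "u * (t * X) = X" if "X \<in> Cn" for X using that t u ut by (simp add: ml(3)[symmetric] ml)
  have "u ^\<^sub>m Suc k * t ^\<^sub>m Suc k = (u ^\<^sub>m k * u) * (t * t ^\<^sub>m k)"
    using t u by (subst pow_Suc_left_n[OF t]) simp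
  also have "\<dots> = u ^\<^sub>m k * t ^\<^sub>m k" using t u by (simp add: ml ut')
  also have "\<dots> = II" using Suc .
  finally show ?case .
qed

lemma sqII: "A \<in> Cn \<Longrightarrow> (A + II) * (A + II) = A * A + II"
proof -
  assume A: "A \<in> Cn"
  have "(A + II) * (A + II) = (A * A + A) + (A + II)" using A by (simp add: ml(1,2) ml(9,10))
  also have "\<dots> = A * A + (A + (A + II))" using A by (simp add: ml(4))
  also have "\<dots> = A * A + II" using A by (simp add: ml(8))
  finally show ?thesis .
qed

lemma pw:
  assumes E: "E \<in> Cn" and y: "y \<in> Cn" and EE: "E * E = E" and Ey: "E * y = y" and yE: "y * E = y"
    and yy: "y * y = E + l \<cdot>\<^sub>m y" and l: "l \<noteq> 0"
    and tdef: "t = (II + E) + y" and u: "u \<in> Cn" and ut: "u * t = II"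
  shows "\<exists>j. t ^\<^sub>m (2 * j + 1) = II"
proof -
  define F where "F = II + E"
  have F: "F \<in> Cn" unfolding F_def using E by simp
  have t: "t \<in> Cn" unfolding tdef using E y by simp
  have FF: "F * F = F" unfolding F_def using E by (simp add: ml EE)
  have Fy: "F * y = ZZ" unfolding F_def using E y by (simp add: ml Ey)
  have yF: "y * F = ZZ" unfolding F_def using E y by (simp add: ml yE)
  have EF: "E * F = ZZ" unfolding F_def using E y by (simp add: ml EE)
  have powf: "\<exists>a b. t ^\<^sub>m k = F + (a \<cdot>\<^sub>m E + b \<cdot>\<^sub>m y)" for k
  proof (induction k)
    case 0
    have "t ^\<^sub>m 0 = F + (1 \<cdot>\<^sub>m E + 0 \<cdot>\<^sub>m y)" using t E y unfolding F_def by (simp add: sm ml)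
    then show ?case by blast
  next
    case (Suc k)
    then obtain a b where ab: "t ^\<^sub>m k = F + (a \<cdot>\<^sub>m E + b \<cdot>\<^sub>m y)" by blast
    have "t ^\<^sub>m Suc k = (F + (a \<cdot>\<^sub>m E + b \<cdot>\<^sub>m y)) * (F + y)"
      using ab tdef F_def by (simp add: ml E)
    also have "\<dots> = F * F + F * y + (a \<cdot>\<^sub>m (E * F) + b \<cdot>\<^sub>m (y * F)) + (a \<cdot>\<^sub>m (E * y) + b \<cdot>\<^sub>m (y * y))"
      using E y F by (simp add: ml sm)
    also have "\<dots> = F + (a \<cdot>\<^sub>m y + b \<cdot>\<^sub>m (E + l \<cdot>\<^sub>m y))"
      using E y F by (simp add: FF Fy yF EF Ey yy ml sm)
    also have "\<dots> = F + (b \<cdot>\<^sub>m E + (a + b * l) \<cdot>\<^sub>m y)"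
      by (rule eq_matI) (use E y F in \<open>auto simp: algebra_simps\<close>)
    finally show ?case by blast
  qed
  have tpow: "t ^\<^sub>m k \<in> Cn" for k using t by simp
  have half: "t ^\<^sub>m m = II" if h: "t ^\<^sub>m (2 * m) = II" for m
  proof -
    obtain a b where ab: "t ^\<^sub>m m = F + (a \<cdot>\<^sub>m E + b \<cdot>\<^sub>m y)" using powf by blast
    define N where "N = (a + 1) \<cdot>\<^sub>m E + b \<cdot>\<^sub>m y"
    have a1: "(a + 1) \<cdot>\<^sub>m E = a \<cdot>\<^sub>m E + E" using smc(1)[OF E, of a 1] sm(5)[OF E] by simp
    have Nt: "N = t ^\<^sub>m m + II" unfolding N_def a1 ab F_def using E y by (simp add: ml)
    have "N * N = t ^\<^sub>m m * t ^\<^sub>m m + II" unfolding Nt using tpow sqII by blast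
    also have "\<dots> = ZZ" using h pow_add_n[OF t, of m m] by (simp add: ml mult_2)
    finally have NN: "N * N = ZZ" .
    have "N = ZZ" by (rule red[OF E y EE Ey yE yy l N_def NN])
    then have "t ^\<^sub>m m + II = ZZ" using Nt by simp
    then have "t ^\<^sub>m m + (t ^\<^sub>m m + II) = t ^\<^sub>m m + ZZ" by simp
    then show ?thesis using tpow[of m] by (simp add: ml)
  qed
  have "\<not> inj (\<lambda>k. t ^\<^sub>m k)"
  proof
    assume inj: "inj (\<lambda>k::nat. t ^\<^sub>m k)"
    have "range (\<lambda>k. t ^\<^sub>m k) \<subseteq> (\<lambda>(a, b). F + (a \<cdot>\<^sub>m E + b \<cdot>\<^sub>m y)) ` UNIV"
    proof
      fix M assume "M \<in> range (\<lambda>k. t ^\<^sub>m k)"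
      then obtain k where k: "M = t ^\<^sub>m k" by blast
      obtain a b where "t ^\<^sub>m k = F + (a \<cdot>\<^sub>m E + b \<cdot>\<^sub>m y)" using powf by blast
      then show "M \<in> (\<lambda>(a, b). F + (a \<cdot>\<^sub>m E + b \<cdot>\<^sub>m y)) ` UNIV"
        using k by (auto intro!: image_eqI[of _ _ "(a,b)"])
    qed
    then have "finite (range (\<lambda>k. t ^\<^sub>m k))" by (rule finite_subset) simp
    with inj show False using finite_imageD infinite_UNIV_nat by blast
  qed
  then obtain a b where ab: "a \<noteq> b" "t ^\<^sub>m a = t ^\<^sub>m b" unfolding inj_def by blast
  have "\<exists>a b. a < b \<and> t ^\<^sub>m a = t ^\<^sub>m b"
    using ab by (metis linorder_neqE_nat)
  then obtain a b where ab: "a < b" "t ^\<^sub>m a = t ^\<^sub>m b" by blast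
  define d where "d = b - a"
  have d: "0 < d" "b = a + d" using ab unfolding d_def by auto
  have "t ^\<^sub>m d = u ^\<^sub>m a * t ^\<^sub>m a * t ^\<^sub>m d"
    using pow_inv_n[OF t u ut, of a] t by (simp add: ml)
  also have "\<dots> = u ^\<^sub>m a * t ^\<^sub>m b" using d pow_add_n[OF t, of a d] t u by (simp add: ml)
  also have "\<dots> = II" using ab pow_inv_n[OF t u ut, of a] by simp
  finally have td: "t ^\<^sub>m d = II" .
  have "\<forall>d. 0 < d \<longrightarrow> t ^\<^sub>m d = II \<longrightarrow> (\<exists>j. t ^\<^sub>m (2 * j + 1) = II)"
  proof (intro allI)
    fix d :: nat
    show "0 < d \<longrightarrow> t ^\<^sub>m d = II \<longrightarrow> (\<exists>j. t ^\<^sub>m (2 * j + 1) = II)"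
    proof (induction d rule: less_induct)
      case (less d)
      show ?case
      proof (intro impI)
        assume d0: "0 < d" and td: "t ^\<^sub>m d = II"
        show "\<exists>j. t ^\<^sub>m (2 * j + 1) = II"
        proof (cases "even d")
          case True
          then obtain m where m: "d = 2 * m" by blast
          have "t ^\<^sub>m m = II" using half td m by simp
          moreover have "m < d" "0 < m" using m d0 by auto
          ultimately show ?thesis using less by blast
        next
          case False
          then obtain j where "d = 2 * j + 1" using oddE by blast
          then show ?thesis using td by blast
        qed
      qed
    qed
  qed
  then show ?thesis using d td by blast
qed

lemma core:
  assumes r: "r \<in> Cn" and s: "s \<in> Cn" and rr: "r * r = II" and ss: "s * s = II"
    and aba: "(r + II) * ((s + II) * (r + II)) = l \<cdot>\<^sub>m (r + II)"
    and bab: "(s + II) * ((r + II) * (s + II)) = l \<cdot>\<^sub>m (s + II)"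
  shows "l = 0 \<Longrightarrow> r * (s * (r * s * r) * s) * r = s"
    and "l \<noteq> 0 \<Longrightarrow> \<exists>j. (r * s) ^\<^sub>m (2 * j + 1) = II"
proof -
  define A where "A = r + II"
  define B where "B = s + II"
  have A: "A \<in> Cn" and B: "B \<in> Cn" unfolding A_def B_def using r s by auto
  have rA: "r = A + II" unfolding A_def using r by (simp add: ml)
  have sB: "s = B + II" unfolding B_def using s by (simp add: ml)
  have AA: "A * A = ZZ" unfolding A_def using sqII[OF r] rr by (simp add: ml)
  have BB: "B * B = ZZ" unfolding B_def using sqII[OF s] ss by (simp add: ml)
  have ABA: "A * (B * A) = l \<cdot>\<^sub>m A" using aba unfolding A_def B_def .
  have BAB: "B * (A * B) = l \<cdot>\<^sub>m B" using bab unfolding A_def B_def .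
  have AAX: "A * (A * X) = ZZ" if "X \<in> Cn" for X using that A AA by (simp add: ml(3)[symmetric] ml)
  have BBX: "B * (B * X) = ZZ" if "X \<in> Cn" for X using that B BB by (simp add: ml(3)[symmetric] ml)
  have ABAX: "A * (B * (A * X)) = l \<cdot>\<^sub>m (A * X)" if "X \<in> Cn" for X
  proof -
    have "A * (B * (A * X)) = (A * (B * A)) * X" using that A B by (simp add: ml)
    then show ?thesis using ABA that A by (simp add: sm)
  qed
  have BABX: "B * (A * (B * X)) = l \<cdot>\<^sub>m (B * X)" if "X \<in> Cn" for X
  proof -
    have "B * (A * (B * X)) = (B * (A * B)) * X" using that A B by (simp add: ml)
    then show ?thesis using BAB that B by (simp add: sm)
  qed
  note rules = AA BB ABA BAB AAX BBX ABAX BABX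
  define M where "M = A + (B + A * B)"
  define S where "S = A * B + B * A"
  have M: "M \<in> Cn" and S: "S \<in> Cn" unfolding M_def S_def using A B by auto
  have SS: "S * S = l \<cdot>\<^sub>m S" unfolding S_def using A B by (simp add: ml sm rules)
  have SM: "S * M = l \<cdot>\<^sub>m M" unfolding S_def M_def using A B by (simp add: ml sm rules)
  have MS: "M * S = l \<cdot>\<^sub>m M" unfolding S_def M_def using A B by (simp add: ml sm rules)
  have MM: "M * M = S + l \<cdot>\<^sub>m M" unfolding S_def M_def using A B by (simp add: ml sm rules)
  have tM: "r * s = M + II" unfolding rA sB M_def using A B by (simp add: ml)
  have t: "r * s \<in> Cn" using r s by simp
  show "r * (s * (r * s * r) * s) * r = s" if l0: "l = 0"
  proof -
    define t where "t = r * s"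
    have t: "t \<in> Cn" unfolding t_def using r s by simp
    have MM0: "M * M = S" using MM l0 M S by (simp add: sm ml)
    have SS0: "S * S = ZZ" using SS l0 S by (simp add: sm)
    have tt: "t * t = S + II" unfolding t_def tM using sqII[OF M] MM0 by simp
    have tttt: "t * (t * (t * t)) = II"
    proof -
      have "t * (t * (t * t)) = (t * t) * (t * t)" using t by (simp add: ml)
      also have "\<dots> = II" unfolding tt using sqII[OF S] SS0 S by (simp add: ml)
      finally show ?thesis .
    qed
    have ts: "t * s = r" unfolding t_def using r s ss by (simp add: ml)
    have "s = (t * (t * (t * t))) * s" using tttt s by (simp add: ml)
    also have "\<dots> = t * (t * (t * (t * s)))" using t s by (simp add: ml)
    also have "\<dots> = t * (t * (t * r))" using ts by simp
    also have "\<dots> = r * (s * (r * s * r) * s) * r" unfolding t_def using r s by (simp add: ml)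
    finally show ?thesis by simp
  qed
  show "\<exists>j. (r * s) ^\<^sub>m (2 * j + 1) = II" if l0: "l \<noteq> 0"
  proof -
    define mu where "mu = inverse l"
    have lmu: "l * mu = 1" "mu * l = 1" "mu * (mu * l) = mu" unfolding mu_def using l0 by auto
    define E where "E = mu \<cdot>\<^sub>m S"
    define y where "y = E + M"
    have E: "E \<in> Cn" and y: "y \<in> Cn" unfolding E_def y_def using S M by auto
    have lE: "l \<cdot>\<^sub>m E = S" unfolding E_def using S lmu by (simp add: sm)
    have EE: "E * E = E" unfolding E_def using S by (simp add: sm SS lmu)
    have EM: "E * M = M" unfolding E_def using S M by (simp add: sm SM lmu)
    have ME: "M * E = M" unfolding E_def using S M by (simp add: sm MS lmu)
    have Ey: "E * y = y" unfolding y_def using E M by (simp add: ml EE EM)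
    have yE: "y * E = y" unfolding y_def using E M by (simp add: ml EE ME)
    have yy: "y * y = E + l \<cdot>\<^sub>m y"
    proof -
      have "y * y = E + (S + l \<cdot>\<^sub>m M)" unfolding y_def using E M S
        by (simp add: ml EE EM ME MM)
      also have "\<dots> = E + l \<cdot>\<^sub>m y" unfolding y_def using E M S by (simp add: sm lE)
      finally show ?thesis .
    qed
    have tdef: "r * s = (II + E) + y" unfolding tM y_def using E M by (simp add: ml)
    have u: "s * r \<in> Cn" using r s by simp
    have ut: "(s * r) * (r * s) = II" using r s rr ss by (simp add: ml(3)[symmetric] ml)
    show ?thesis by (rule pw[OF E y EE Ey yE yy l0 tdef u ut])
  qed
qed

end




lemma minv_eq:
  assumes A: "A \<in> carrier_mat n n" and B: "B \<in> carrier_mat n n" and AB: "A * B = 1\<^sub>m n" and BA: "B * A = 1\<^sub>m n"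
  shows "minv n A = (B :: 'a :: field mat)"
  unfolding minv_def
proof (rule the_equality)
  show "B \<in> carrier_mat n n \<and> A * B = 1\<^sub>m n \<and> B * A = 1\<^sub>m n" using B AB BA by simp
next
  fix B' assume h: "B' \<in> carrier_mat n n \<and> A * B' = 1\<^sub>m n \<and> B' * A = 1\<^sub>m n"
  have B'c: "B' \<in> carrier_mat n n" using h by simp
  have "B' = B' * (A * B)" using AB right_mult_one_mat[OF B'c] by simp
  also have "\<dots> = (B' * A) * B" using B'c A B by (metis assoc_mult_mat)
  also have "\<dots> = B" using h B left_mult_one_mat[OF B] by simp
  finally show "B' = B" .
qed

lemma SL_inv:
  assumes g: "g \<in> SL_mat n"
  shows "\<exists>h \<in> carrier_mat n n. g * h = 1\<^sub>m n \<and> h * g = (1\<^sub>m n :: 'a :: field mat)"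
proof -
  have gc: "g \<in> carrier_mat n n" and d: "det g = 1" using g unfolding SL_mat_def by auto
  have "g \<in> Units (ring_mat TYPE('a) n ())"
    by (rule det_non_zero_imp_unit[OF gc]) (simp add: d)
  then show ?thesis unfolding Units_def ring_mat_def by auto
qed

definition good :: "nat \<Rightarrow> 'a :: field mat \<Rightarrow> bool" where
  "good n y \<longleftrightarrow> y \<in> carrier_mat n n \<and> y * y = 1\<^sub>m n \<and>
     (\<forall>M \<in> carrier_mat n n. \<exists>c. (y + 1\<^sub>m n) * (M * (y + 1\<^sub>m n)) = c \<cdot>\<^sub>m (y + 1\<^sub>m n))"

lemma good_conj:
  assumes ch: "(1::'a::{field,finite}) + 1 = 0"
    and gJ: "good n (J :: 'a mat)" and P: "P \<in> carrier_mat n n" and Q: "Q \<in> carrier_mat n n"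
    and PQ: "P * Q = 1\<^sub>m n" and QP: "Q * P = 1\<^sub>m n"
  shows "good n (P * J * Q)"
proof -
  note ml = ml[OF ch] and sm = sm[OF ch] and [simp] = mc[OF ch]
  have J: "J \<in> carrier_mat n n" and JJ: "J * J = 1\<^sub>m n" using gJ unfolding good_def by auto
  define K where "K = J + 1\<^sub>m n"
  have K: "K \<in> carrier_mat n n" unfolding K_def using J by simp
  have "P * (K * Q) = P * (J * Q + Q)" unfolding K_def using J Q by (simp add: ml(1,9))
  also have "\<dots> = P * (J * Q) + P * Q" using J Q P by (intro mult_add_distrib_mat) auto
  also have "\<dots> = P * J * Q + 1\<^sub>m n" using J Q P PQ by (simp add: ml(3))
  finally have eq: "P * J * Q + 1\<^sub>m n = P * (K * Q)" by simp
  have "(P * J * Q) * (P * J * Q) = P * (J * ((Q * P) * (J * Q)))" using P Q J by (simp add: ml)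
  also have "\<dots> = 1\<^sub>m n"
  proof -
    have JJQ: "J * (J * Q) = Q" using J Q JJ by (metis assoc_mult_mat left_mult_one_mat)
    show ?thesis using P Q J by (simp only: QP) (simp add: ml JJQ PQ)
  qed
  finally have sq: "(P * J * Q) * (P * J * Q) = 1\<^sub>m n" .
  have "\<exists>c. (P * J * Q + 1\<^sub>m n) * (M * (P * J * Q + 1\<^sub>m n)) = c \<cdot>\<^sub>m (P * J * Q + 1\<^sub>m n)"
    if M: "M \<in> carrier_mat n n" for M
  proof -
    have QMP: "Q * (M * P) \<in> carrier_mat n n" using Q M P by simp
    obtain c where c: "K * ((Q * (M * P)) * K) = c \<cdot>\<^sub>m K"
      using gJ QMP unfolding good_def K_def by blast
    have "(P * (K * Q)) * (M * (P * (K * Q))) = P * ((K * ((Q * (M * P)) * K)) * Q)"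
      using P Q K M by (simp add: ml)
    also have "\<dots> = c \<cdot>\<^sub>m (P * (K * Q))" unfolding c using P Q K by (simp add: sm ml)
    finally show ?thesis unfolding eq by blast
  qed
  then show ?thesis unfolding good_def using sq P Q J by simp
qed

lemma jm_repl: "jordan_matrix (replicate k (1, 1 :: 'a :: field)) = 1\<^sub>m k"
proof (induction k)
  case 0
  then show ?case by (auto simp: jordan_matrix_def)
next
  case (Suc k)
  have sl: "sum_list (map fst (replicate k (1::nat, 1::'a))) = k" by (induction k) auto
  show ?case unfolding replicate_Suc jordan_matrix_Cons Suc sl
    by (rule eq_matI) auto
qed

lemma jm_index:
  assumes n: "n \<ge> 2" and i: "i < n" and j: "j < n"
  shows "jordan_matrix ((2, 1 :: 'a :: field) # replicate (n - 2) (1, 1)) $$ (i, j)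
    = (if i = j then 1 else if i = 0 \<and> j = 1 then 1 else 0)"
proof -
  have sl: "sum_list (map fst (replicate k (1::nat, 1::'a))) = k" for k by (induction k) auto
  show ?thesis unfolding jordan_matrix_Cons sl jm_repl using n i j
    by (auto simp: jordan_block_index)
qed

lemma jm_carrier: "n \<ge> 2 \<Longrightarrow> jordan_matrix ((2, 1 :: 'a :: field) # replicate (n - 2) (1, 1)) \<in> carrier_mat n n"
proof -
  assume "n \<ge> 2"
  have sl: "sum_list (map fst (replicate k (1::nat, 1::'a))) = k" for k by (induction k) auto
  then show ?thesis using \<open>n \<ge> 2\<close> unfolding carrier_mat_def by (simp add: sl)
qed


lemma good_J:
  assumes ch: "(1::'a::{field,finite}) + 1 = 0" and n: "n \<ge> 2"
  shows "good n (jordan_matrix ((2, 1 :: 'a) # replicate (n - 2) (1, 1)))"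
proof -
  note ml = ml[OF ch] and sm = sm[OF ch] and [simp] = mc[OF ch]
  define J where "J = jordan_matrix ((2, 1 :: 'a) # replicate (n - 2) (1, 1))"
  have J: "J \<in> carrier_mat n n" unfolding J_def using jm_carrier[OF n] .
  define K where "K = J + 1\<^sub>m n"
  have K: "K \<in> carrier_mat n n" unfolding K_def using J by simp
  have Ki: "K $$ (i, j) = (if i = 0 \<and> j = 1 then 1 else 0)" if "i < n" "j < n" for i j
    unfolding K_def J_def using that jm_index[OF n that] ch by auto
  have II: "1\<^sub>m n + 1\<^sub>m n = (0\<^sub>m n n :: 'a mat)" using ml(7)[OF one_carrier_mat] .
  have JK: "J = K + 1\<^sub>m n" unfolding K_def using J by (simp add: ml II)
  have KK: "K * K = 0\<^sub>m n n"
  proof (rule eq_matI)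
    fix i j assume "i < dim_row (0\<^sub>m n n :: 'a mat)" "j < dim_col (0\<^sub>m n n :: 'a mat)"
    then have ij: "i < n" "j < n" by auto
    have "(K * K) $$ (i, j) = (\<Sum>k\<in>{0..<n}. K $$ (i, k) * K $$ (k, j))"
      using ij K by (simp add: scalar_prod_def)
    also have "\<dots> = 0" using ij by (intro sum.neutral) (auto simp: Ki)
    finally show "(K * K) $$ (i, j) = (0\<^sub>m n n :: 'a mat) $$ (i, j)" using ij by simp
  qed (use K in auto)
  have JJ: "J * J = 1\<^sub>m n" unfolding JK using sqII[OF ch K] KK K by (simp add: ml)
  have KMK: "K * (M * K) = (M $$ (1, 0)) \<cdot>\<^sub>m K" if M: "M \<in> carrier_mat n n" for M
  proof (rule eq_matI)
    fix i j assume "i < dim_row (M $$ (1, 0) \<cdot>\<^sub>m K)" "j < dim_col (M $$ (1, 0) \<cdot>\<^sub>m K)"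
    then have ij: "i < n" "j < n" using K by auto
    have MK: "(M * K) $$ (k, j) = (if j = 1 then M $$ (k, 0) else 0)" if k: "k < n" for k
    proof -
      have "(M * K) $$ (k, j) = (\<Sum>l\<in>{0..<n}. M $$ (k, l) * K $$ (l, j))"
        using ij k K M by (simp add: scalar_prod_def)
      also have "\<dots> = (\<Sum>l\<in>{0..<n}. if l = 0 then (if j = 1 then M $$ (k, l) else 0) else 0)"
        using ij by (intro sum.cong) (auto simp: Ki)
      also have "\<dots> = (if j = 1 then M $$ (k, 0) else 0)" using n by (simp add: sum.delta)
      finally show ?thesis .
    qed
    have "(K * (M * K)) $$ (i, j) = (\<Sum>k\<in>{0..<n}. K $$ (i, k) * (M * K) $$ (k, j))"
      using ij K M by (simp add: scalar_prod_def)
    also have "\<dots> = (\<Sum>k\<in>{0..<n}. if k = 1 then (if i = 0 then (M * K) $$ (k, j) else 0) else 0)"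
      using ij by (intro sum.cong) (auto simp: Ki)
    also have "\<dots> = (if i = 0 then (M * K) $$ (1, j) else 0)" using n by (simp add: sum.delta)
    also have "\<dots> = (M $$ (1, 0) \<cdot>\<^sub>m K) $$ (i, j)" using ij n K by (auto simp: MK Ki)
    finally show "(K * (M * K)) $$ (i, j) = (M $$ (1, 0) \<cdot>\<^sub>m K) $$ (i, j)" .
  qed (use K M in auto)
  show ?thesis unfolding good_def J_def[symmetric] K_def[symmetric] using J JJ KMK by blast
qed

theorem mainTheorem14:
  fixes x :: "'a :: {field, finite} mat" and n :: nat
  assumes "even (card (UNIV :: 'a set))"
    and "n \<ge> 2"
    and "x \<in> SL_mat n"
    and "jordan_nf x ((2, 1) # replicate (n - 2) (1, 1))"
  shows "\<not> type_D (SL_class n x) (mconj n)"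
proof
  have ch: "(1::'a) + 1 = 0" using char2_of_even assms(1) by blast
  note ml = ml[OF ch] and sm = sm[OF ch] and [simp] = mc[OF ch]
  have xc: "x \<in> carrier_mat n n" using assms(3) unfolding SL_mat_def by auto
  define J where "J = jordan_matrix ((2, 1 :: 'a) # replicate (n - 2) (1, 1))"
  have gJ: "good n J" unfolding J_def by (rule good_J[OF ch assms(2)])
  have Jc: "J \<in> carrier_mat n n" unfolding J_def by (rule jm_carrier[OF assms(2)])
  obtain n' P Q where PQ: "{x, J, P, Q} \<subseteq> carrier_mat n' n'" "P * Q = 1\<^sub>m n'" "Q * P = 1\<^sub>m n'" "x = P * J * Q"
    using similar_matD assms(4) unfolding jordan_nf_def J_def by blast
  have "n' = n" using PQ(1) xc by auto
  then have gx: "good n x" using good_conj[OF ch gJ, of P Q] PQ by auto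
  have cls: "good n y" if y: "y \<in> SL_class n x" for y
  proof -
    obtain g where g: "g \<in> SL_mat n" "y = mconj n g x" using y unfolding SL_class_def by blast
    obtain h where h: "h \<in> carrier_mat n n" "g * h = 1\<^sub>m n" "h * g = 1\<^sub>m n" using SL_inv[OF g(1)] by blast
    have gc: "g \<in> carrier_mat n n" using g(1) unfolding SL_mat_def by auto
    have "minv n g = h" using minv_eq[OF gc h(1) h(2) h(3)] .
    then have "y = g * x * h" using g(2) unfolding mconj_def by simp
    then show ?thesis using good_conj[OF ch gx gc h(1) h(2) h(3)] by simp
  qed
  have mc_good: "mconj n r z = r * z * r" if "good n r" for r z
  proof -
    have "r \<in> carrier_mat n n" "r * r = 1\<^sub>m n" using that unfolding good_def by auto
    then have "minv n r = r" using minv_eq by blast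
    then show ?thesis unfolding mconj_def by simp
  qed
  assume "type_D (SL_class n x) (mconj n)"
  then obtain R S r s where dec: "decomposition (SL_class n x) (mconj n) R S"
    and rR: "r \<in> R" and sS: "s \<in> S" and neq: "mconj n r (mconj n s (mconj n r s)) \<noteq> s"
    unfolding type_D_def by blast
  have sub: "R \<union> S \<subseteq> SL_class n x" and disj: "R \<inter> S = {}"
    and act: "\<forall>y\<in>R \<union> S. mconj n y ` R = R"
    using dec unfolding decomposition_def is_subrack_def by auto
  have gr: "good n r" and gs: "good n s" using cls sub rR sS by auto
  have r: "r \<in> carrier_mat n n" and rr: "r * r = 1\<^sub>m n" using gr unfolding good_def by auto
  have s: "s \<in> carrier_mat n n" and ss: "s * s = 1\<^sub>m n" using gs unfolding good_def by auto
  define A where "A = r + 1\<^sub>m n"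
  define B where "B = s + 1\<^sub>m n"
  have A: "A \<in> carrier_mat n n" and B: "B \<in> carrier_mat n n" unfolding A_def B_def using r s by auto
  obtain c1 where c1: "A * (B * A) = c1 \<cdot>\<^sub>m A" using gr B unfolding good_def A_def by blast
  obtain c2 where c2: "B * (A * B) = c2 \<cdot>\<^sub>m B" using gs A unfolding good_def B_def by blast
  have "\<exists>l. A * (B * A) = l \<cdot>\<^sub>m A \<and> B * (A * B) = l \<cdot>\<^sub>m B"
  proof (cases "A * B = 0\<^sub>m n n")
    case True
    have "A * (B * A) = (A * B) * A" using A B by (simp add: ml)
    then have 1: "A * (B * A) = 0 \<cdot>\<^sub>m A" using True A by (simp add: sm ml)
    have 2: "B * (A * B) = 0 \<cdot>\<^sub>m B" using True B by (simp add: sm ml)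
    show ?thesis using 1 2 by blast
  next
    case False
    have "c1 \<cdot>\<^sub>m (A * B) = (A * (B * A)) * B" using c1 A B by (simp add: sm)
    also have "\<dots> = A * (B * (A * B))" using A B by (simp add: ml)
    also have "\<dots> = c2 \<cdot>\<^sub>m (A * B)" using c2 A B by (simp add: sm)
    finally have "c1 = c2" using smult_cancel[OF ch, of "A * B" n c1 c2] False A B by simp
    then show ?thesis using c1 c2 by blast
  qed
  then obtain l where aba: "A * (B * A) = l \<cdot>\<^sub>m A" and bab: "B * (A * B) = l \<cdot>\<^sub>m B" by blast
  have grs: "mconj n r (mconj n s (mconj n r s)) = r * (s * (r * s * r) * s) * r"
    using mc_good[OF gr] mc_good[OF gs] by simp
  show False
  proof (cases "l = 0")
    case True
    have "r * (s * (r * s * r) * s) * r = s"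
      using core(1)[OF ch r s rr ss aba[unfolded A_def B_def] bab[unfolded A_def B_def] True] .
    then show False using neq grs by simp
  next
    case False
    obtain j where j: "(r * s) ^\<^sub>m (2 * j + 1) = 1\<^sub>m n"
      using core(2)[OF ch r s rr ss aba[unfolded A_def B_def] bab[unfolded A_def B_def] False] by blast
    define t where "t = r * s"
    have t: "t \<in> carrier_mat n n" unfolding t_def using r s by simp
    have tcomm: "t * t ^\<^sub>m k = t ^\<^sub>m k * t" for k
      using pow_Suc_left_n[OF ch t, of k] by simp
    have inR: "t ^\<^sub>m (2 * k) * r \<in> R" for k
    proof (induction k)
      case 0
      then show ?case using rR r t by simp
    next
      case (Suc k)
      define T where "T = t ^\<^sub>m (2 * k)"
      have T: "T \<in> carrier_mat n n" unfolding T_def using t by simp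
      have sR: "s \<in> R \<union> S" and rRS: "r \<in> R \<union> S" using sS rR by auto
      have z1: "mconj n s (T * r) \<in> R" using act sR Suc unfolding T_def by blast
      have z2: "mconj n r (mconj n s (T * r)) \<in> R" using act rRS z1 by blast
      have comm: "r * (s * (T * X)) = T * (r * (s * X))" if X: "X \<in> carrier_mat n n" for X
      proof -
        have "r * (s * (T * X)) = (t * T) * X" unfolding t_def using r s T X by (simp add: ml)
        also have "\<dots> = (T * t) * X" unfolding T_def using tcomm by simp
        also have "\<dots> = T * (r * (s * X))" unfolding t_def using r s T X by (simp add: ml)
        finally show ?thesis .
      qed
      have "mconj n r (mconj n s (T * r)) = r * (s * (T * r) * s) * r"
        using mc_good[OF gr] mc_good[OF gs] by simp
      also have "\<dots> = r * (s * (T * (r * (s * r))))" using r s T by (simp add: ml)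
      also have "\<dots> = T * (r * (s * (r * (s * r))))" using comm r s by simp
      also have "\<dots> = T * t * t * r" unfolding t_def using T r s by (simp add: ml)
      also have "\<dots> = t ^\<^sub>m (2 * Suc k) * r" unfolding T_def by simp
      finally show ?case using z2 by simp
    qed
    define P where "P = t ^\<^sub>m (2 * j)"
    have P: "P \<in> carrier_mat n n" unfolding P_def using t by simp
    have "P * r = (P * t) * s" unfolding t_def using r s ss P by (simp add: ml)
    also have "\<dots> = s" using j s unfolding t_def P_def by simp
    finally have "t ^\<^sub>m (2 * j) * r = s" unfolding P_def .
    then have "s \<in> R" using inR[of j] by simp
    then show False using sS disj by blast
  qed
qed
end
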